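(* If $d$ and $e$ are degree sequences with the same sum and $d\succeq e$, then $\Delta^*(d)\le\Delta^*(e)$.
   Context: Degree sequences (of finite simple graphs, terms may be $0$) are listed in nonincreasing order; sequences of different lengths are compared after padding with zeros. $m(d)=\max\{i : d_i\ge i-1\}$. For integers $k\ge 0$, $\Delta_k(d)=k(k-1)+\sum_{i>k}\min\{k,d_i\}-\sum_{i\le k}d_i$, and $\Delta^*(d)=\max\{\Delta_k(d):1\le k\le m(d)\}$. Majorization (dominance order): for degree sequences $d,e$ with the same sum, $d\succeq e$ means $\sum_{i\le k}d_i\ge\sum_{i\le k}e_i$ for all $k$. *)

theory Defs
  imports Main
begin

definition simple_graph_on :: "nat \<Rightarrow> (nat \<Rightarrow> nat \<Rightarrow> bool) \<Rightarrow> bool" where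
  "simple_graph_on n E \<longleftrightarrow>
     (\<forall>u v. E u v \<longrightarrow> E v u) \<and> (\<forall>u. \<not> E u u) \<and> (\<forall>u v. E u v \<longrightarrow> u < n \<and> v < n)"

definition degree_sequence :: "nat list \<Rightarrow> bool" where
  "degree_sequence d \<longleftrightarrow>
     sorted_wrt (\<ge>) d \<and>
     (\<exists>E. simple_graph_on (length d) E \<and>
          (\<forall>i < length d. card {j. j < length d \<and> E i j} = d ! i))"

text \<open>1-indexed entry, padded with zeros.\<close>
definition dseq :: "nat list \<Rightarrow> nat \<Rightarrow> nat" where
  "dseq d i = (if 1 \<le> i \<and> i \<le> length d then d ! (i - 1) else 0)"

text \<open>m(d) = max{i : d_i >= i - 1} (indices i >= 1, zero padding; beyond length d + 1 the
  condition fails, except that i = 1 always qualifies).\<close>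
definition mval :: "nat list \<Rightarrow> nat" where
  "mval d = Max {i. 1 \<le> i \<and> i \<le> length d + 1 \<and> i - 1 \<le> dseq d i}"

definition Delta :: "nat \<Rightarrow> nat list \<Rightarrow> int" where
  "Delta k d = int (k * (k - 1)) + (\<Sum>i = k + 1..length d. int (min k (dseq d i)))
               - (\<Sum>i = 1..k. int (dseq d i))"

definition Delta_star :: "nat list \<Rightarrow> int" where
  "Delta_star d = Max ((\<lambda>k. Delta k d) ` {1..mval d})"

definition majorizes :: "nat list \<Rightarrow> nat list \<Rightarrow> bool" where
  "majorizes d e \<longleftrightarrow> sum_list d = sum_list e \<and>
     (\<forall>k. (\<Sum>i = 1..k. dseq e i) \<le> (\<Sum>i = 1..k. dseq d i))"

end

theory Submission
  imports Defs
begin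

definition SS :: "(nat \<Rightarrow> nat) \<Rightarrow> nat \<Rightarrow> int" where
  "SS f k = (\<Sum>i = 1..k. int (f i))"

definition DD :: "(nat \<Rightarrow> nat) \<Rightarrow> nat \<Rightarrow> nat \<Rightarrow> int" where
  "DD f N k = int (k * (k - 1)) + (\<Sum>i = k + 1..N. int (min k (f i))) - SS f k"

lemma sum_split:
  fixes h :: "nat \<Rightarrow> int"
  assumes "a \<le> b" "b \<le> c"
  shows "(\<Sum>i = a + 1..c. h i) = (\<Sum>i = a + 1..b. h i) + (\<Sum>i = b + 1..c. h i)"
proof -
  have "{a+1..c} = {a+1..b} \<union> {b+1..c}" using assms by auto
  moreover have "{a+1..b} \<inter> {b+1..c} = {}" by auto
  ultimately show ?thesis by (simp add: sum.union_disjoint)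
qed

lemma SS_split:
  assumes "a \<le> b"
  shows "SS f b = SS f a + (\<Sum>i = a + 1..b. int (f i))"
  unfolding SS_def using sum_split[of 0 a b "\<lambda>i. int (f i)"] assms by simp

lemma Delta_DD:
  assumes "length d \<le> N"
  shows "Delta k d = DD (dseq d) N k"
proof -
  have "(\<Sum>i = k + 1..N. int (min k (dseq d i))) = (\<Sum>i = k + 1..length d. int (min k (dseq d i)))"
    by (rule sum.mono_neutral_right) (use assms in \<open>auto simp: dseq_def\<close>)
  then show ?thesis unfolding Delta_def DD_def SS_def by simp
qed

lemma dseq_mono:
  assumes "sorted_wrt (\<ge>) d" "1 \<le> i" "i \<le> j"
  shows "dseq d j \<le> dseq d i"
proof (cases "j \<le> length d")
  case False
  then show ?thesis unfolding dseq_def by simp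
next
  case True
  have le: "d ! (j - 1) \<le> d ! (i - 1)"
  proof (cases "i = j")
    case False
    then have "i - 1 < j - 1" "j - 1 < length d" using assms True by auto
    then show ?thesis using sorted_wrt_nth_less[OF assms(1)] by blast
  qed simp
  show ?thesis unfolding dseq_def using True assms le by auto
qed

lemma SS_total:
  assumes "length d \<le> N"
  shows "SS (dseq d) N = int (sum_list d)"
proof -
  have "SS (dseq d) N = (\<Sum>i<N. int (dseq d (Suc i)))"
    unfolding SS_def by (induction N) (auto simp: sum.cl_ivl_Suc)
  also have "\<dots> = (\<Sum>i<length d. int (d ! i))"
    by (rule sum.mono_neutral_cong_right) (use assms in \<open>auto simp: dseq_def\<close>)
  also have "\<dots> = int (sum_list d)"
    by (simp add: sum_list_sum_nth atLeast0LessThan)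
  finally show ?thesis .
qed

lemma lemA:
  assumes monog: "\<And>i j. 1 \<le> i \<Longrightarrow> i \<le> j \<Longrightarrow> g j \<le> g i"
    and total: "SS f N = SS g N"
    and maj: "\<And>k. SS g k \<le> SS f k"
  shows "DD f N k \<le> DD g N k"
proof (cases "k < N")
  case False
  then show ?thesis unfolding DD_def using maj[of k] by simp
next
  case True
  define A where "A = {j. k \<le> j \<and> j \<le> N \<and> (j = k \<or> k \<le> g j)}"
  define j0 where "j0 = Max A"
  have finA: "finite A" unfolding A_def by auto
  have kA: "k \<in> A" unfolding A_def using True by auto
  have j0A: "j0 \<in> A" unfolding j0_def using finA kA Max_in by blast
  have kj0: "k \<le> j0" and j0N: "j0 \<le> N" using j0A unfolding A_def by auto
  have up: "k \<le> g i" if "k < i" "i \<le> j0" for i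
  proof -
    have "j0 \<noteq> k" using that by auto
    then have "k \<le> g j0" using j0A unfolding A_def by auto
    moreover have "g j0 \<le> g i" using monog[of i j0] that by auto
    ultimately show ?thesis by simp
  qed
  have down: "g i < k" if "j0 < i" "i \<le> N" for i
  proof (rule ccontr)
    assume "\<not> g i < k"
    then have "i \<in> A" unfolding A_def using that kj0 by auto
    then have "i \<le> j0" unfolding j0_def using finA Max_ge by blast
    then show False using that by simp
  qed
  have g1: "(\<Sum>i = k + 1..N. int (min k (g i))) =
      (\<Sum>i = k + 1..j0. int (min k (g i))) + (\<Sum>i = j0 + 1..N. int (min k (g i)))"
    by (rule sum_split[OF kj0 j0N])
  have g2: "(\<Sum>i = k + 1..j0. int (min k (g i))) = (\<Sum>i = k + 1..j0. int k)"
  proof (rule sum.cong[OF refl])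
    fix i assume "i \<in> {k + 1..j0}"
    then have "k \<le> g i" using up[of i] by auto
    then show "int (min k (g i)) = int k" by simp
  qed
  have g3: "(\<Sum>i = j0 + 1..N. int (min k (g i))) = (\<Sum>i = j0 + 1..N. int (g i))"
  proof (rule sum.cong[OF refl])
    fix i assume "i \<in> {j0 + 1..N}"
    then have "g i < k" using down[of i] by auto
    then show "int (min k (g i)) = int (g i)" by simp
  qed
  have f1: "(\<Sum>i = k + 1..N. int (min k (f i))) =
      (\<Sum>i = k + 1..j0. int (min k (f i))) + (\<Sum>i = j0 + 1..N. int (min k (f i)))"
    by (rule sum_split[OF kj0 j0N])
  have f2: "(\<Sum>i = k + 1..j0. int (min k (f i))) \<le> (\<Sum>i = k + 1..j0. int k)"
    by (rule sum_mono) auto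
  have f3: "(\<Sum>i = j0 + 1..N. int (min k (f i))) \<le> (\<Sum>i = j0 + 1..N. int (f i))"
    by (rule sum_mono) auto
  have sf: "SS f N = SS f j0 + (\<Sum>i = j0 + 1..N. int (f i))" using SS_split[OF j0N] .
  have sg: "SS g N = SS g j0 + (\<Sum>i = j0 + 1..N. int (g i))" using SS_split[OF j0N] .
  have "(\<Sum>i = k + 1..N. int (min k (f i))) \<le> (\<Sum>i = k + 1..N. int (min k (g i)))"
    using g1 g2 g3 f1 f2 f3 sf sg total maj[of j0] by linarith
  then show ?thesis unfolding DD_def using maj[of k] by linarith
qed

lemma lemB:
  assumes fge: "\<And>i. 1 \<le> i \<Longrightarrow> i \<le> k \<Longrightarrow> k - 1 \<le> f i"
    and glt: "\<And>i. p < i \<Longrightarrow> g i < p"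
    and total: "SS f N = SS g N"
    and maj: "SS g p \<le> SS f p"
    and p1: "1 \<le> p" and pk: "p < k" and kN: "k \<le> N"
  shows "DD f N k \<le> DD g N p"
proof -
  have pN: "p \<le> N" using pk kN by simp
  have dg: "DD g N p = int (p * (p - 1)) + SS g N - 2 * SS g p"
  proof -
    have "(\<Sum>i = p + 1..N. int (min p (g i))) = (\<Sum>i = p + 1..N. int (g i))"
    proof (rule sum.cong[OF refl])
      fix i assume "i \<in> {p + 1..N}"
      then have "g i < p" using glt[of i] by auto
      then show "int (min p (g i)) = int (g i)" by simp
    qed
    then show ?thesis unfolding DD_def using SS_split[OF pN, of g] by simp
  qed
  have df: "DD f N k \<le> int (k * (k - 1)) + SS f N - 2 * SS f k"
  proof -
    have "(\<Sum>i = k + 1..N. int (min k (f i))) \<le> (\<Sum>i = k + 1..N. int (f i))"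
      by (rule sum_mono) auto
    then show ?thesis unfolding DD_def using SS_split[OF kN, of f] by simp
  qed
  have "(\<Sum>i = p + 1..k. int (k - 1)) \<le> (\<Sum>i = p + 1..k. int (f i))"
  proof (rule sum_mono)
    fix i assume "i \<in> {p + 1..k}"
    then have "k - 1 \<le> f i" using fge[of i] p1 by auto
    then show "int (k - 1) \<le> int (f i)" by simp
  qed
  then have sk: "SS f k \<ge> SS f p + int (k - p) * int (k - 1)"
    using SS_split[of p k f] pk by simp
  define K where "K = int k"
  define P where "P = int p"
  have e1: "int (k * (k - 1)) = K * (K - 1)" unfolding K_def using pk by (simp add: of_nat_diff)
  have e2: "int (p * (p - 1)) = P * (P - 1)" unfolding P_def using p1 by (simp add: of_nat_diff)
  have e3: "int (k - p) * int (k - 1) = (K - P) * (K - 1)" unfolding K_def P_def using pk by (simp add: of_nat_diff)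
  have key: "P * (P - 1) - (K * (K - 1) - 2 * ((K - P) * (K - 1))) = (K - P) * (K - P - 1)"
    by (simp add: algebra_simps)
  have "(K - P) * (K - P - 1) \<ge> 0" using pk unfolding K_def P_def by simp
  then show ?thesis using dg df sk e1 e2 e3 key total maj by linarith
qed

lemma mval_facts:
  "mval d \<in> {i. 1 \<le> i \<and> i \<le> length d + 1 \<and> i - 1 \<le> dseq d i}"
  "\<And>i. i \<in> {i. 1 \<le> i \<and> i \<le> length d + 1 \<and> i - 1 \<le> dseq d i} \<Longrightarrow> i \<le> mval d"
proof -
  let ?M = "{i. 1 \<le> i \<and> i \<le> length d + 1 \<and> i - 1 \<le> dseq d i}"
  have fin: "finite ?M" by (rule finite_subset[of _ "{..length d + 1}"]) auto
  have ne: "1 \<in> ?M" by auto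
  show "mval d \<in> ?M" unfolding mval_def using Max_in[OF fin] ne by blast
  show "\<And>i. i \<in> ?M \<Longrightarrow> i \<le> mval d" unfolding mval_def using Max_ge[OF fin] by blast
qed

theorem theorem17:
  fixes d e :: "nat list"
  assumes "degree_sequence d" and "degree_sequence e"
    and "sum_list d = sum_list e"
    and "majorizes d e"
  shows "Delta_star d \<le> Delta_star e"
proof -
  have sd: "sorted_wrt (\<ge>) d" using assms(1) unfolding degree_sequence_def by simp
  have se: "sorted_wrt (\<ge>) e" using assms(2) unfolding degree_sequence_def by simp
  define N where "N = length d + length e + 2"
  have Dd: "\<And>k. Delta k d = DD (dseq d) N k" by (rule Delta_DD) (simp add: N_def)
  have De: "\<And>k. Delta k e = DD (dseq e) N k" by (rule Delta_DD) (simp add: N_def)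
  have total: "SS (dseq d) N = SS (dseq e) N"
    using SS_total[of d N] SS_total[of e N] assms(3) by (simp add: N_def)
  have maj: "SS (dseq e) k \<le> SS (dseq d) k" for k
  proof -
    have "(\<Sum>i = 1..k. dseq e i) \<le> (\<Sum>i = 1..k. dseq d i)"
      using assms(4) unfolding majorizes_def by blast
    then show ?thesis unfolding SS_def of_nat_sum[symmetric] by (simp only: of_nat_le_iff)
  qed
  have monoe: "\<And>i j. 1 \<le> i \<Longrightarrow> i \<le> j \<Longrightarrow> dseq e j \<le> dseq e i"
    using dseq_mono[OF se] by blast
  have fin: "finite ((\<lambda>k. Delta k d) ` {1..mval d})" by simp
  have ne: "(\<lambda>k. Delta k d) ` {1..mval d} \<noteq> {}" using mval_facts(1)[of d] by auto
  obtain k0 where k0: "k0 \<in> {1..mval d}" and k0eq: "Delta_star d = Delta k0 d"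
    using Max_in[OF fin ne] unfolding Delta_star_def by auto
  have ge: "Delta k e \<le> Delta_star e" if "k \<in> {1..mval e}" for k
    unfolding Delta_star_def by (rule Max_ge) (use that in auto)
  show ?thesis
  proof (cases "k0 \<le> mval e")
    case True
    have "Delta k0 d \<le> Delta k0 e" unfolding Dd De
      by (rule lemA[OF monoe total maj])
    also have "\<dots> \<le> Delta_star e" using ge[of k0] True k0 by auto
    finally show ?thesis using k0eq by simp
  next
    case False
    define p where "p = mval e"
    have p1: "1 \<le> p" using mval_facts(1)[of e] unfolding p_def by auto
    have pk: "p < k0" using False unfolding p_def by simp
    have k0N: "k0 \<le> N" using k0 mval_facts(1)[of d] unfolding N_def by auto
    have fge: "k0 - 1 \<le> dseq d i" if "1 \<le> i" "i \<le> k0" for i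
    proof -
      have "mval d - 1 \<le> dseq d (mval d)" using mval_facts(1)[of d] by auto
      moreover have "dseq d (mval d) \<le> dseq d i" using dseq_mono[OF sd, of i "mval d"] that k0 by auto
      ultimately show ?thesis using k0 by auto
    qed
    have gp: "dseq e (p + 1) < p"
    proof (rule ccontr)
      assume a: "\<not> dseq e (p + 1) < p"
      show False
      proof (cases "p + 1 \<le> length e + 1")
        case True
        then have "p + 1 \<le> mval e" using a by (intro mval_facts(2)) auto
        then show False unfolding p_def by simp
      next
        case False
        then have "dseq e (p + 1) = 0" unfolding dseq_def by auto
        then show False using a p1 by simp
      qed
    qed
    have glt: "dseq e i < p" if "p < i" for i
      using monoe[of "p + 1" i] that gp by auto
    have "Delta k0 d \<le> Delta p e" unfolding Dd De
      by (rule lemB[OF fge glt total maj p1 pk k0N])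
    also have "\<dots> \<le> Delta_star e" using ge[of p] p1 unfolding p_def by auto
    finally show ?thesis using k0eq by simp
  qed
qed

end
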